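(* Let $f:\mathcal M\to\mathcal M_0$ satisfy $|f(A)|\le1$ for all $A\in\mathcal M$ and, for each $A\in\mathcal M$, either $f(A)=0$ or $f(A)_{i,j}(1-2A_{i,j})>0$ for all $i,j\in\mathbb K$. For $\varepsilon\ge0$ let $\mathcal X^\varepsilon$ be the MRN over $\Theta$ with transition cocycle $P_{\mathcal X^\varepsilon}(0,\omega)=I_k$ and $P_{\mathcal X^\varepsilon}(n,\omega)=\big(A_{n-1}+\min\{\varepsilon,1\}f(A_{n-1})\big)\cdots\big(A_0+\min\{\varepsilon,1\}f(A_0)\big)$ for $n\ge1$, $\omega=(A_z)_{z\in\mathbb Z}$. Then, up to a $\mu$-null set, $$\Omega^{(1)}:=\{q^{(1)}=0\}=\{\omega=(A_z)_{z\in\mathbb Z}: f(A_{-1})=f(A_{-2})=\dots=f(A_{-N_0^-(\omega)})=0\}.$$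
   Context: Fix $k\ge2$, $\mathbb K=\{1,\dots,k\}$, $S=\{s_1,\dots,s_k\}$, $e_1,\dots,e_k$ the canonical basis of $\mathbb R^k$; $|\cdot|$ is the $\ell^1$-induced matrix norm (max absolute column sum). $\mathcal M$ is the set of $k\times k$ matrices with entries in $\{0,1\}$ having exactly one entry $1$ in each column; $\mathcal M_0$ is the space of real $k\times k$ matrices with all column sums zero. $\nu$ is the uniform probability on $\mathcal M$, $(\Omega,\mathcal F,\mu)=\bigotimes_{z\in\mathbb Z}(\mathcal M,2^{\mathcal M},\nu)$, $\theta$ the left shift $(A_z)_z\mapsto(A_{z+1})_z$. A Markov random network (MRN) over $\Theta=(\Omega,\mathcal F,\mu,\theta)$ is a Markov process on $S\times\Omega$ moving from fibre $S\times\{\theta^n\omega\}$ to $S\times\{\theta^{n+1}\omega\}$, with transition cocycle $P(n,\omega)_{i,j}=\mathbb P\{X_n=(s_i,\theta^n\omega)\mid X_0=(s_j,\omega)\}$. $\mathcal X^0$ is the DRN with $P^0(n,\omega)=A_{n-1}\cdots A_0$; it is synchronized, with synchronization index $J:\Omega\to\mathbb K$ given by $e_{J(\omega)}=\lim_{n\to\infty}A_{-1}\cdots A_{-n}e_1$ ($\mu$-a.e.). $N_0^-(\omega)=\min\{n\in\mathbb N:\operatorname{rank}(A_{-1}A_{-2}\cdots A_{-n})=1\}$ when this set is nonempty, and $N_0^-(\omega)=1$ otherwise; it is a pull-back synchronization time, i.e. $P^0(n,\theta^{-n}\omega)e_j=e_{J(\omega)}$ for all $j$ and $n\ge N_0^-(\omega)$,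 $\mu$-a.e. Let $P^{(1)}(n,\omega)=\frac{d}{d\varepsilon}P_{\mathcal X^\varepsilon}(n,\omega)|_{\varepsilon=0}$ and, for any pull-back synchronization time $N^-$ (e.g. $N_0^-$), $q^{(1)}(\omega)=P^{(1)}(N^-(\omega),\theta^{-N^-(\omega)}\omega)\,e_{J(\theta^{-N^-(\omega)}\omega)}$ (this is $\mu$-a.e. independent of the choice of $N^-$). *)

theory Defs
  imports "HOL-Probability.Probability"
begin

text \<open>Index set K is a finite type 'k; matrices are real^'k^'k, entry A$i$j is row i, column j.\<close>

type_synonym 'k mat = "real^'k^'k"

definition Mset :: "'k::finite mat set" where
  "Mset = {A. (\<forall>i j. A$i$j = 0 \<or> A$i$j = 1) \<and> (\<forall>j. \<exists>!i. A$i$j = 1)}"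

definition M0set :: "'k::finite mat set" where
  "M0set = {A. \<forall>j. (\<Sum>i\<in>UNIV. A$i$j) = 0}"

text \<open>l1-induced matrix norm: maximal absolute column sum.\<close>
definition colnorm :: "'k::finite mat \<Rightarrow> real" where
  "colnorm A = Max (range (\<lambda>j. \<Sum>i\<in>UNIV. \<bar>A$i$j\<bar>))"

definition mu :: "(int \<Rightarrow> 'k::finite mat) measure" where
  "mu = PiM UNIV (\<lambda>_. measure_pmf (pmf_of_set Mset))"

definition shift :: "int \<Rightarrow> (int \<Rightarrow> 'a) \<Rightarrow> (int \<Rightarrow> 'a)" where
  "shift n \<omega> = (\<lambda>z. \<omega> (z + n))"

fun Peps :: "('k::finite mat \<Rightarrow> 'k mat) \<Rightarrow> real \<Rightarrow> nat \<Rightarrow> (int \<Rightarrow> 'k mat) \<Rightarrow> 'k mat" where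
  "Peps f \<epsilon> 0 \<omega> = mat 1"
| "Peps f \<epsilon> (Suc n) \<omega> = (\<omega> (int n) + min \<epsilon> 1 *\<^sub>R f (\<omega> (int n))) ** Peps f \<epsilon> n \<omega>"

definition P1 :: "('k::finite mat \<Rightarrow> 'k mat) \<Rightarrow> nat \<Rightarrow> (int \<Rightarrow> 'k mat) \<Rightarrow> 'k mat" where
  "P1 f n \<omega> = vector_derivative (\<lambda>\<epsilon>. Peps f \<epsilon> n \<omega>) (at 0 within {0..})"

fun backprod :: "(int \<Rightarrow> 'k::finite mat) \<Rightarrow> nat \<Rightarrow> 'k mat" where
  "backprod \<omega> 0 = mat 1"
| "backprod \<omega> (Suc n) = backprod \<omega> n ** \<omega> (- int n - 1)"

text \<open>Synchronization index J, w.r.t. the distinguished first basis vector e(i1).\<close>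
definition Jidx :: "'k::finite \<Rightarrow> (int \<Rightarrow> 'k mat) \<Rightarrow> 'k" where
  "Jidx i1 \<omega> = (THE j. (\<lambda>n. backprod \<omega> n *v axis i1 1) \<longlonglongrightarrow> axis j 1)"

definition N0 :: "(int \<Rightarrow> 'k::finite mat) \<Rightarrow> nat" where
  "N0 \<omega> = (if \<exists>n\<ge>1. rank (backprod \<omega> n) = 1 then LEAST n. n \<ge> 1 \<and> rank (backprod \<omega> n) = 1 else 1)"

definition q1 :: "('k::finite mat \<Rightarrow> 'k mat) \<Rightarrow> 'k \<Rightarrow> (int \<Rightarrow> 'k mat) \<Rightarrow> real^'k" where
  "q1 f i1 \<omega> = (let N = N0 \<omega>; \<omega>' = shift (- int N) \<omega>
                in P1 f N \<omega>' *v axis (Jidx i1 \<omega>') 1)"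

end

theory Submission
  imports Defs
begin


lemma Mset_finite: "finite (Mset :: 'k::finite mat set)"
proof -
  have "Mset \<subseteq> (\<lambda>g::'k\<Rightarrow>'k\<Rightarrow>bool. (\<chi> i j. (if g i j then 1 else 0 :: real))) ` UNIV"
  proof
    fix A :: "'k mat" assume "A \<in> Mset"
    hence "\<forall>i j. A$i$j = 0 \<or> A$i$j = 1" by (simp add: Mset_def)
    hence "A = (\<chi> i j. if A$i$j = 1 then 1 else 0)" by (auto simp: vec_eq_iff)
    thus "A \<in> range (\<lambda>g::'k\<Rightarrow>'k\<Rightarrow>bool. (\<chi> i j. (if g i j then 1 else 0 :: real)))"
      by (intro image_eqI[where x="\<lambda>i j. A$i$j = 1"]) auto
  qed
  thus ?thesis by (rule finite_subset) simp
qed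

lemma Mset_nonempty: "(Mset :: 'k::finite mat set) \<noteq> {}"
proof -
  obtain i0 :: 'k where True by simp
  have "(\<chi> i j. (if i = i0 then 1 else 0 :: real)) \<in> Mset" by (auto simp: Mset_def)
  thus ?thesis by blast
qed

lemma AE_Mset: "AE \<omega> in (mu :: (int \<Rightarrow> 'k::finite mat) measure). \<forall>z. \<omega> z \<in> Mset"
  unfolding AE_all_countable mu_def
proof
  fix z :: int
  show "AE \<omega> in PiM UNIV (\<lambda>_. measure_pmf (pmf_of_set (Mset :: 'k mat set))). \<omega> z \<in> Mset"
    apply (rule AE_PiM_component[where P="\<lambda>A. A \<in> Mset"])
      apply (simp add: measure_pmf.prob_space_axioms)
     apply simp
    by (simp add: AE_measure_pmf_iff set_pmf_of_set[OF Mset_nonempty Mset_finite])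
qed



lemma mm_add_rdistrib: "((A::'k::finite mat) + B) ** C = A ** C + B ** C"
  by (vector matrix_matrix_mult_def sum.distrib[symmetric] field_simps)

lemma mm_scaleR_right: "(A::'k::finite mat) ** (k *\<^sub>R B) = k *\<^sub>R (A ** B)"
  by (simp add: matrix_matrix_mult_def vec_eq_iff sum_distrib_left mult_ac)

lemma mm_scaleR_left: "(k *\<^sub>R (A::'k::finite mat)) ** B = k *\<^sub>R (A ** B)"
  by (simp add: matrix_matrix_mult_def vec_eq_iff sum_distrib_left mult_ac)

lemma bb_mm: "bounded_bilinear (\<lambda>(A::'k::finite mat) B. A ** B)"
proof -
  have "bilinear (\<lambda>(A::'k mat) B. A ** B)"
    unfolding bilinear_def
    by (auto intro!: linearI simp: matrix_add_ldistrib mm_add_rdistrib mm_scaleR_right mm_scaleR_left)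
  thus ?thesis by (simp add: bilinear_conv_bounded_bilinear)
qed

lemma shift_shift[simp]: "shift a (shift b \<omega>) = shift (a + b) \<omega>"
  by (auto simp: shift_def fun_eq_iff algebra_simps)

lemma shift_apply[simp]: "shift a \<omega> z = \<omega> (z + a)"
  by (simp add: shift_def)

lemma backprod_left: "backprod \<omega> (Suc r) = \<omega> (-1) ** backprod (shift (-1) \<omega>) r"
proof (induction r)
  case 0 thus ?case by simp
next
  case (Suc r)
  have "backprod \<omega> (Suc (Suc r)) = backprod \<omega> (Suc r) ** \<omega> (- int (Suc r) - 1)"
    by (simp only: backprod.simps)
  also have "\<dots> = \<omega> (-1) ** (backprod (shift (-1) \<omega>) r ** \<omega> (- int (Suc r) - 1))"
    by (simp only: Suc matrix_mul_assoc)
  also have "backprod (shift (-1) \<omega>) r ** \<omega> (- int (Suc r) - 1) = backprod (shift (-1) \<omega>) (Suc r)"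
    by (simp add: algebra_simps)
  finally show ?case .
qed

definition PL :: "(int \<Rightarrow> 'k::finite mat) \<Rightarrow> nat \<Rightarrow> nat \<Rightarrow> 'k mat" where
  "PL \<omega> m n = backprod (shift (int n) \<omega>) (n - Suc m)"

lemma PL_Suc_less: "m < n \<Longrightarrow> PL \<omega> m (Suc n) = \<omega> (int n) ** PL \<omega> m n"
proof -
  assume "m < n"
  hence "Suc n - Suc m = Suc (n - Suc m)" by simp
  thus ?thesis unfolding PL_def by (simp del: backprod.simps(2) add: backprod_left)
qed

lemma PL_Suc_eq: "PL \<omega> n (Suc n) = mat 1"
  by (simp add: PL_def)

definition Dsum :: "('k::finite mat \<Rightarrow> 'k mat) \<Rightarrow> (int \<Rightarrow> 'k mat) \<Rightarrow> nat \<Rightarrow> 'k mat" where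
  "Dsum f \<omega> n = (\<Sum>m<n. PL \<omega> m n ** f (\<omega> (int m)) ** Peps f 0 m \<omega>)"

lemma Peps0_Suc: "Peps f 0 (Suc n) \<omega> = \<omega> (int n) ** Peps f 0 n \<omega>"
  by simp

lemma Dsum_Suc: "Dsum f \<omega> (Suc n) = \<omega> (int n) ** Dsum f \<omega> n + f (\<omega> (int n)) ** Peps f 0 n \<omega>"
proof -
  have "Dsum f \<omega> (Suc n) = (\<Sum>m<n. PL \<omega> m (Suc n) ** f (\<omega> (int m)) ** Peps f 0 m \<omega>)
        + PL \<omega> n (Suc n) ** f (\<omega> (int n)) ** Peps f 0 n \<omega>"
    by (simp add: Dsum_def)
  also have "(\<Sum>m<n. PL \<omega> m (Suc n) ** f (\<omega> (int m)) ** Peps f 0 m \<omega>)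
     = (\<Sum>m<n. \<omega> (int n) ** (PL \<omega> m n ** f (\<omega> (int m)) ** Peps f 0 m \<omega>))"
    by (rule sum.cong) (auto simp: PL_Suc_less matrix_mul_assoc)
  also have "\<dots> = \<omega> (int n) ** Dsum f \<omega> n"
    by (simp add: Dsum_def bounded_bilinear.sum_right[OF bb_mm])
  finally show ?thesis by (simp add: PL_Suc_eq)
qed

lemma Peps_deriv:
  "((\<lambda>e. Peps f e n \<omega>) has_vector_derivative Dsum f \<omega> n) (at 0 within {0..})"
proof (induction n)
  case 0 thus ?case by (simp add: Dsum_def)
next
  case (Suc n)
  let ?F = "f (\<omega> (int n))"
  have d0: "((\<lambda>e. \<omega> (int n) + e *\<^sub>R ?F) has_vector_derivative ?F) (at 0 within {0..})"
    using has_vector_derivative_add[OF has_vector_derivative_const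
         has_vector_derivative_scaleR[OF DERIV_ident has_vector_derivative_const]]
    by simp
  have d1: "((\<lambda>e. \<omega> (int n) + min e 1 *\<^sub>R ?F) has_vector_derivative ?F) (at 0 within {0..})"
    by (rule has_vector_derivative_transform_within[OF d0, where d=1]) (auto simp: dist_real_def)
  have D: "((\<lambda>e. (\<omega> (int n) + min e 1 *\<^sub>R ?F) ** Peps f e n \<omega>) has_vector_derivative
     ((\<omega> (int n) + min 0 1 *\<^sub>R ?F) ** Dsum f \<omega> n + ?F ** Peps f 0 n \<omega>)) (at 0 within {0..})"
    by (rule bounded_bilinear.has_vector_derivative[OF bb_mm d1 Suc])
  have eq: "(\<lambda>e. Peps f e (Suc n) \<omega>) = (\<lambda>e. (\<omega> (int n) + min e 1 *\<^sub>R ?F) ** Peps f e n \<omega>)"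
    by (simp only: Peps.simps)
  have m0: "\<omega> (int n) + min 0 1 *\<^sub>R ?F = \<omega> (int n)" by simp
  show ?case unfolding eq Dsum_Suc using D unfolding m0 .
qed

lemma P1_eq: "P1 f n \<omega> = Dsum f \<omega> n"
  unfolding P1_def
  by (rule vector_derivative_within[OF _ Peps_deriv])
     (simp add: at_within_Ici_at_right)



lemma mv_axis: "((A::'k::finite mat) *v axis l 1) $ i = A $ i $ l"
  by (simp add: matrix_vector_mult_basis column_def)

lemma mm_zero_right: "(A::'k::finite mat) ** 0 = 0"
  by (simp add: matrix_matrix_mult_def vec_eq_iff)
lemma mm_zero_left: "0 ** (A::'k::finite mat) = 0"
  by (simp add: matrix_matrix_mult_def vec_eq_iff)

lemma mv_sum: "finite S \<Longrightarrow> (\<Sum>m\<in>S. (A m :: 'k::finite mat)) *v x = (\<Sum>m\<in>S. A m *v x)"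
  by (induction S rule: finite_induct) (auto simp: matrix_vector_mult_add_rdistrib)

definition OH :: "'k::finite mat \<Rightarrow> bool" where
  "OH A \<longleftrightarrow> (\<forall>l. \<exists>i. A *v axis l 1 = axis i 1)"

lemma OH_mat1: "OH (mat 1)" by (auto simp: OH_def)

lemma OH_mult: "OH A \<Longrightarrow> OH B \<Longrightarrow> OH (A ** B)"
  unfolding OH_def by (metis matrix_vector_mul_assoc)

lemma Mset_OH: assumes "A \<in> Mset" shows "OH A"
  unfolding OH_def
proof
  fix l
  have z: "\<forall>i j. A$i$j = 0 \<or> A$i$j = 1" and e0: "\<forall>j. \<exists>!i. A$i$j = 1"
    using assms unfolding Mset_def by simp_all
  have e: "\<exists>!i. A$i$l = 1" using e0 by (rule spec)
  obtain i where i: "A$i$l = 1" and u: "\<forall>i'. A$i'$l = 1 \<longrightarrow> i' = i"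
    using e unfolding Ex1_def by blast
  have "(A *v axis l 1) $ r = axis i 1 $ r" for r
  proof (cases "r = i")
    case True thus ?thesis by (simp add: mv_axis i)
  next
    case False
    hence "A$r$l \<noteq> 1" using u by blast
    hence "A$r$l = 0" using z by blast
    moreover have "axis i (1::real) $ r = 0" using False by (simp add: axis_def)
    ultimately show ?thesis by (simp add: mv_axis)
  qed
  hence "A *v axis l 1 = axis i 1" by (simp add: vec_eq_iff)
  thus "\<exists>i. A *v axis l 1 = axis i 1" by blast
qed

lemma OH_entry: assumes "OH B" shows "B$c$i = (if B *v axis i 1 = axis c 1 then 1 else 0)"
proof -
  from assms obtain c' where c': "B *v axis i 1 = axis c' 1" unfolding OH_def by blast
  have "B$c$i = axis c' 1 $ c" using c' mv_axis by metis
  show ?thesis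
  proof (cases "c' = c")
    case True thus ?thesis using \<open>B$c$i = axis c' 1 $ c\<close> c' by simp
  next
    case False
    hence "axis c' (1::real) $ c = 0" by (simp add: axis_def)
    moreover have "axis c' (1::real) \<noteq> axis c 1" using False by (simp add: axis_eq_axis)
    ultimately show ?thesis using \<open>B$c$i = axis c' 1 $ c\<close> c' by simp
  qed
qed

lemma Peps0_OH: "(\<forall>i<n. \<omega> (int i) \<in> Mset) \<Longrightarrow> OH (Peps f 0 n \<omega>)"
  by (induction n) (auto simp: OH_mat1 OH_mult Mset_OH)

lemma backprod_OH: "(\<forall>i<r. \<omega> (- int i - 1) \<in> Mset) \<Longrightarrow> OH (backprod \<omega> r)"
  by (induction r) (auto simp: OH_mat1 OH_mult Mset_OH)

lemma Peps0_split: "m < n \<Longrightarrow> Peps f 0 n \<omega> = PL \<omega> m n ** \<omega> (int m) ** Peps f 0 m \<omega>"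
proof (induction n)
  case 0 thus ?case by simp
next
  case (Suc n)
  show ?case
  proof (cases "m = n")
    case True thus ?thesis by (simp add: PL_Suc_eq)
  next
    case False
    hence "m < n" using Suc by simp
    thus ?thesis using Suc by (simp add: PL_Suc_less matrix_mul_assoc)
  qed
qed

lemma rank_const:
  assumes "\<forall>i. (B::'k::finite mat) *v axis i 1 = axis c 1"
  shows "rank B = 1"
proof -
  have e: "B$r$i = axis c 1 $ r" for r i using assms mv_axis by metis
  have "B *v x = (\<Sum>i\<in>UNIV. x$i) *\<^sub>R axis c 1" for x
    by (simp add: vec_eq_iff matrix_vector_mult_def e sum_distrib_right mult.commute)
  hence "range (\<lambda>x. B *v x) = range (\<lambda>t. t *\<^sub>R axis c (1::real))"
  proof -
    assume h: "\<And>x. B *v x = (\<Sum>i\<in>UNIV. x$i) *\<^sub>R axis c 1"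
    have s: "(\<Sum>i\<in>UNIV. (t *\<^sub>R axis c (1::real)) $ i) = t" for t
    proof -
      have "(\<Sum>i\<in>UNIV. (t *\<^sub>R axis c (1::real)) $ i) = (\<Sum>i\<in>UNIV. if i = c then t else 0)"
        by (rule sum.cong) (auto simp: axis_def)
      thus ?thesis by simp
    qed
    show ?thesis
    proof
      show "range (\<lambda>x. B *v x) \<subseteq> range (\<lambda>t. t *\<^sub>R axis c 1)" using h by auto
      show "range (\<lambda>t. t *\<^sub>R axis c 1) \<subseteq> range (\<lambda>x. B *v x)"
      proof
        fix y assume "y \<in> range (\<lambda>t. t *\<^sub>R axis c (1::real))"
        then obtain t where "y = t *\<^sub>R axis c 1" by blast
        hence "y = B *v (t *\<^sub>R axis c 1)" using h s by simp
        thus "y \<in> range (\<lambda>x. B *v x)" by blast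
      qed
    qed
  qed
  also have "\<dots> = span {axis c 1}" by (simp add: span_singleton)
  finally show ?thesis by (simp add: rank_dim_range)
qed



lemma shift_0[simp]: "shift 0 \<omega> = \<omega>" by (simp add: shift_def)

lemma term_sign:
  fixes A B F :: "'k::finite mat"
  assumes A: "A \<in> Mset" and F0: "F \<in> M0set" and Fs: "F = 0 \<or> (\<forall>i j. F$i$j * (1 - 2*A$i$j) > 0)"
    and B: "OH B" and l: "A *v axis l 1 = axis l' 1" and c: "B *v axis l' 1 = axis c 1"
  shows "(B *v (F *v axis l 1))$c \<le> 0"
    and "F \<noteq> 0 \<Longrightarrow> \<exists>i. B$c$i \<noteq> 1 \<Longrightarrow> (B *v (F *v axis l 1))$c < 0"
proof -
  define S where "S = {i. B$c$i = 1}"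
  have Bc: "B$c$i = (if i \<in> S then 1 else 0)" for i using OH_entry[OF B, of c i] by (auto simp: S_def)
  have "(B *v (F *v axis l 1))$c = (\<Sum>i\<in>UNIV. B$c$i * F$i$l)"
    by (simp add: matrix_vector_mult_def[of B] mv_axis)
  also have "\<dots> = (\<Sum>i\<in>UNIV. if i \<in> S then F$i$l else 0)"
    by (rule sum.cong) (auto simp: Bc)
  also have "\<dots> = (\<Sum>i\<in>S. F$i$l)"
    by (simp add: sum.inter_restrict[symmetric])
  finally have eq1: "(B *v (F *v axis l 1))$c = (\<Sum>i\<in>S. F$i$l)" .
  have colsum: "(\<Sum>i\<in>UNIV. F$i$l) = 0" using F0 by (simp add: M0set_def)
  have split: "(\<Sum>i\<in>UNIV. F$i$l) = (\<Sum>i\<in>UNIV - S. F$i$l) + (\<Sum>i\<in>S. F$i$l)"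
    by (rule sum.subset_diff) auto
  have "B$c$l' = 1" using OH_entry[OF B, of c l'] c by simp
  hence l'S: "l' \<in> S" by (simp add: S_def)
  have Al: "A$i$l = 0" if "i \<noteq> l'" for i
  proof -
    have "A$i$l = axis l' 1 $ i" using l mv_axis by metis
    thus ?thesis using that by (simp add: axis_def)
  qed
  have nn: "F$i$l \<ge> 0" if "i \<notin> S" for i
  proof -
    have "i \<noteq> l'" using that l'S by blast
    hence "A$i$l = 0" by (rule Al)
    show ?thesis
    proof (cases "F = 0")
      case True thus ?thesis by simp
    next
      case False
      hence "F$i$l * (1 - 2*A$i$l) > 0" using Fs by blast
      thus ?thesis using \<open>A$i$l = 0\<close> by simp
    qed
  qed
  have neg: "(\<Sum>i\<in>S. F$i$l) = - (\<Sum>i\<in>UNIV - S. F$i$l)" using colsum split by linarith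
  have "(\<Sum>i\<in>UNIV - S. F$i$l) \<ge> 0" by (rule sum_nonneg) (use nn in auto)
  thus "(B *v (F *v axis l 1))$c \<le> 0" using eq1 neg by linarith
  assume F1: "F \<noteq> 0" and "\<exists>i. B$c$i \<noteq> 1"
  then obtain i0 where "B$c$i0 \<noteq> 1" by blast
  hence i0: "i0 \<in> UNIV - S" by (simp add: S_def)
  hence "i0 \<noteq> l'" using l'S by blast
  hence "A$i0$l = 0" by (rule Al)
  moreover have "F$i0$l * (1 - 2*A$i0$l) > 0" using Fs F1 by blast
  ultimately have "F$i0$l > 0" by simp
  hence "(\<Sum>i\<in>UNIV - S. F$i$l) > 0"
    by (intro sum_pos2[OF _ i0]) (use nn in auto)
  thus "(B *v (F *v axis l 1))$c < 0" using eq1 neg by linarith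
qed



lemma main_pw:
  fixes f :: "'k::finite mat \<Rightarrow> 'k mat" and i1 :: 'k and \<omega> :: "int \<Rightarrow> 'k mat"
  assumes card: "CARD('k) \<ge> 2"
    and f0: "\<forall>A\<in>Mset. f A \<in> M0set"
    and fs: "\<forall>A\<in>Mset. f A = 0 \<or> (\<forall>i j. f A $ i $ j * (1 - 2 * A $ i $ j) > 0)"
    and M\<omega>: "\<forall>z. \<omega> z \<in> Mset"
  shows "q1 f i1 \<omega> = 0 \<longleftrightarrow> (\<forall>m\<in>{1..N0 \<omega>}. f (\<omega> (- int m)) = 0)"
proof -
  define N where "N = N0 \<omega>"
  define \<omega>' where "\<omega>' = shift (- int N) \<omega>"
  define j where "j = Jidx i1 \<omega>'"
  have q: "q1 f i1 \<omega> = Dsum f \<omega>' N *v axis j 1"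
    by (simp add: q1_def Let_def P1_eq N_def \<omega>'_def j_def)
  have w'[simp]: "\<omega>' z = \<omega> (z - int N)" for z by (simp add: \<omega>'_def)
  have M': "\<omega>' z \<in> Mset" for z using M\<omega> by simp
  have PLeq: "PL \<omega>' m N = backprod \<omega> (N - Suc m)" for m by (simp add: PL_def \<omega>'_def)
  have qs: "q1 f i1 \<omega> = (\<Sum>k<N. (PL \<omega>' k N ** f (\<omega>' (int k)) ** Peps f 0 k \<omega>') *v axis j 1)"
    by (simp add: q Dsum_def mv_sum)
  show ?thesis
  proof
    assume q0: "q1 f i1 \<omega> = 0"
    show "\<forall>m\<in>{1..N0 \<omega>}. f (\<omega> (- int m)) = 0"
    proof (rule ccontr)
      assume "\<not> (\<forall>m\<in>{1..N0 \<omega>}. f (\<omega> (- int m)) = 0)"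
      then obtain m where m: "m \<in> {1..N}" and fm: "f (\<omega> (- int m)) \<noteq> 0" by (auto simp: N_def)
      define m0 where "m0 = N - m"
      have m0N: "m0 < N" using m by (simp add: m0_def)
      have fm0: "f (\<omega>' (int m0)) \<noteq> 0" using m fm by (simp add: m0_def of_nat_diff)
      obtain c where c: "Peps f 0 N \<omega>' *v axis j 1 = axis c 1"
        using Peps0_OH[of N \<omega>' f] M' unfolding OH_def by blast
      define t where "t k = ((PL \<omega>' k N ** f (\<omega>' (int k)) ** Peps f 0 k \<omega>') *v axis j 1)$c" for k
      have tk: "t k \<le> 0 \<and> (f (\<omega>' (int k)) \<noteq> 0 \<longrightarrow> (\<exists>i. PL \<omega>' k N $c$i \<noteq> 1) \<longrightarrow> t k < 0)"
        if k: "k < N" for k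
      proof -
        obtain l where l: "Peps f 0 k \<omega>' *v axis j 1 = axis l 1"
          using Peps0_OH[of k \<omega>' f] M' unfolding OH_def by blast
        obtain l' where l': "\<omega>' (int k) *v axis l 1 = axis l' 1"
          using Mset_OH[OF M'[of "int k"]] unfolding OH_def by blast
        have "Peps f 0 N \<omega>' *v axis j 1 = PL \<omega>' k N *v (\<omega>' (int k) *v (Peps f 0 k \<omega>' *v axis j 1))"
          using Peps0_split[OF k, of f \<omega>'] by (simp add: matrix_vector_mul_assoc matrix_mul_assoc)
        hence cc: "PL \<omega>' k N *v axis l' 1 = axis c 1" using c l l' by simp
        have OHB: "OH (PL \<omega>' k N)" unfolding PLeq by (rule backprod_OH) (simp add: M\<omega>)
        have te: "t k = (PL \<omega>' k N *v (f (\<omega>' (int k)) *v axis l 1))$c"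
          unfolding t_def using l by (simp add: matrix_vector_mul_assoc[symmetric])
        show ?thesis
          using term_sign[OF M'[of "int k"] bspec[OF f0 M'[of "int k"]] bspec[OF fs M'[of "int k"]] OHB l' cc]
          unfolding te by blast
      qed
      have ex: "\<exists>i. PL \<omega>' m0 N $c$i \<noteq> 1"
      proof (cases "m = 1")
        case True
        hence "PL \<omega>' m0 N = mat 1" using m by (simp add: PLeq m0_def)
        moreover obtain i :: 'k where "i \<noteq> c"
        proof -
          have "\<not> (UNIV \<subseteq> {c})"
          proof
            assume "UNIV \<subseteq> {c}"
            hence "CARD('k) \<le> card {c}" by (intro card_mono) auto
            thus False using card by simp
          qed
          thus ?thesis using that by blast
        qed
        ultimately show ?thesis by (auto simp: mat_def)
      next
        case False
        hence m2: "m \<ge> 2" using m by simp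
        hence ex: "\<exists>n\<ge>1. rank (backprod \<omega> n) = 1"
          using m by (auto simp: N_def N0_def split: if_splits)
        hence NL: "N = (LEAST n. n \<ge> 1 \<and> rank (backprod \<omega> n) = 1)" by (simp add: N_def N0_def)
        have r: "N - Suc m0 = m - 1" using m by (simp add: m0_def)
        have "m - 1 < N" using m by (cases m) auto
        hence "\<not> (m - 1 \<ge> 1 \<and> rank (backprod \<omega> (m - 1)) = 1)"
          unfolding NL by (rule not_less_Least)
        hence nr: "rank (backprod \<omega> (m - 1)) \<noteq> 1" using m2 by simp
        show ?thesis
        proof (rule ccontr)
          assume "\<not> ?thesis"
          hence all: "\<forall>i. backprod \<omega> (m - 1) $ c $ i = 1" by (simp add: PLeq r)
          have OHB: "OH (backprod \<omega> (m - 1))" by (rule backprod_OH) (simp add: M\<omega>)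
          have "\<forall>i. backprod \<omega> (m - 1) *v axis i 1 = axis c 1"
          proof
            fix i show "backprod \<omega> (m - 1) *v axis i 1 = axis c 1"
              using OH_entry[OF OHB, of c i] all[rule_format, of i] by (auto split: if_splits)
          qed
          thus False using rank_const nr by blast
        qed
      qed
      have "q1 f i1 \<omega> $ c = (\<Sum>k<N. t k)" by (simp add: qs t_def)
      also have "\<dots> = t m0 + (\<Sum>k\<in>{..<N} - {m0}. t k)"
        by (rule sum.remove) (use m0N in auto)
      also have "\<dots> < 0"
      proof -
        have "t m0 < 0" using tk[OF m0N] fm0 ex by blast
        moreover have "(\<Sum>k\<in>{..<N} - {m0}. t k) \<le> 0" by (rule sum_nonpos) (use tk in auto)
        ultimately show ?thesis by linarith
      qed
      finally show False using q0 by simp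
    qed
  next
    assume all: "\<forall>m\<in>{1..N0 \<omega>}. f (\<omega> (- int m)) = 0"
    have "f (\<omega>' (int k)) = 0" if "k < N" for k
    proof -
      have "N - k \<in> {1..N0 \<omega>}" using that by (auto simp: N_def)
      hence "f (\<omega> (- int (N - k))) = 0" using all by blast
      thus ?thesis using that by (simp add: of_nat_diff)
    qed
    thus "q1 f i1 \<omega> = 0" by (simp add: qs mm_zero_right mm_zero_left)
  qed
qed


theorem proposition6p2:
  fixes f :: "'k::finite mat \<Rightarrow> 'k mat" and i1 :: 'k
  assumes "CARD('k) \<ge> 2"
    and "\<forall>A\<in>Mset. f A \<in> M0set"
    and "\<forall>A\<in>Mset. colnorm (f A) \<le> 1"
    and "\<forall>A\<in>Mset. f A = 0 \<or> (\<forall>i j. f A $ i $ j * (1 - 2 * A $ i $ j) > 0)"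
  shows "AE \<omega> in mu. (q1 f i1 \<omega> = 0 \<longleftrightarrow> (\<forall>m\<in>{1..N0 \<omega>}. f (\<omega> (- int m)) = 0))"
proof -
  have "AE \<omega> in (mu :: (int \<Rightarrow> 'k mat) measure). \<forall>z. \<omega> z \<in> Mset" by (rule AE_Mset)
  thus ?thesis by (rule eventually_mono) (rule main_pw[OF assms(1,2,4)])
qed

end
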